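(* Let $r>0$ and let $f$ be analytic on an open neighbourhood of the closed half-disc $D_r:=\overline{B}_r(0)\cap\overline{\mathbb C}_+$. Let $Y,\eta$ be parameters with $0<\eta<Y<r$, and let $\alpha,\beta\in(0,1)$ satisfy $$\beta\Big(\frac{1-\alpha}{\alpha+\beta}\Big)^2>\frac{Y}{\eta}.$$ Let $N(\alpha r)$ be the number of zeros of $f$, counted with multiplicity, in $D_{\alpha r,\eta,Y}:=\{z\in\mathbb C:\eta\le\operatorname{Im}z\le Y,\ |z|\le\alpha r\}$. Then, if $f(i\beta r)\ne0$, $$N(\alpha r)\le\frac{2}{\log\Lambda(r)}\log\Big(\frac{1}{\min\{\beta,1-\beta\}}\frac{\sup_{z\in\partial D_r}|f(z)|}{|f(i\beta r)|}\Big),\qquad \Lambda(r):=\frac{1+\frac{4\beta\eta}{(\alpha+\beta)^2}\frac1r}{1+\frac{4Y}{(1-\alpha)^2}\frac1r},$$ and $\Lambda(r)>1$.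
   Context: $\overline{B}_r(0)$ is the closed disc of radius $r$ centered at $0$; $\overline{\mathbb C}_+=\{\operatorname{Im}z\ge0\}$; $\partial D_r$ is the boundary of the half-disc $D_r$ (the segment $[-r,r]$ together with the upper semicircle of radius $r$). *)

theory Defs
  imports "HOL-Complex_Analysis.Complex_Analysis"
begin

definition half_disc :: "real \<Rightarrow> complex set" where
  "half_disc r = cball 0 r \<inter> {z. Im z \<ge> 0}"

definition strip_region :: "real \<Rightarrow> real \<Rightarrow> real \<Rightarrow> complex set" where
  "strip_region s \<eta> Y = {z. \<eta> \<le> Im z \<and> Im z \<le> Y \<and> norm z \<le> s}"

definition zero_count :: "(complex \<Rightarrow> complex) \<Rightarrow> complex set \<Rightarrow> int" where
  "zero_count f A = (\<Sum>z\<in>{z\<in>A. f z = 0}. zorder f z)"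

definition Lambda :: "real \<Rightarrow> real \<Rightarrow> real \<Rightarrow> real \<Rightarrow> real \<Rightarrow> real" where
  "Lambda \<alpha> \<beta> \<eta> Y r =
     (1 + 4 * \<beta> * \<eta> / (\<alpha> + \<beta>)^2 * (1 / r)) / (1 + 4 * Y / (1 - \<alpha>)^2 * (1 / r))"

end

theory Submission
  imports Defs
begin


definition bl :: "real \<Rightarrow> complex \<Rightarrow> complex \<Rightarrow> complex" where
  "bl r z w = ((w - z) * (of_real (r^2) - z * w)) / ((w - cnj z) * (of_real (r^2) - cnj z * w))"

lemma id1: "norm (\<i> * of_real c - cnj z)^2 = norm (\<i> * of_real c - z)^2 + 4 * Im z * c"
  unfolding cmod_power2 by (simp add: power2_eq_square algebra_simps)

lemma id2: "norm (of_real (r^2) - z * (\<i> * of_real c))^2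
   = norm (of_real (r^2) - cnj z * (\<i> * of_real c))^2 + 4 * r^2 * c * Im z"
  unfolding cmod_power2 by (simp add: power2_eq_square algebra_simps)

lemma bnd1:
  assumes "norm z \<le> a * r" "0 \<le> b" "0 \<le> r"
  shows "norm (\<i> * of_real (b*r) - z)^2 \<le> ((a + b) * r)^2"
proof -
  have "norm (\<i> * of_real (b*r) - z) \<le> norm (\<i> * of_real (b*r)) + norm z" by (rule norm_triangle_ineq4)
  also have "\<dots> \<le> (a+b)*r" using assms by (simp add: norm_mult algebra_simps abs_of_nonneg)
  finally show ?thesis by (intro power_mono) auto
qed

lemma bnd2:
  assumes "norm z \<le> a * r" "0 \<le> b" "b < 1" "0 < r" "a < 1" "0 \<le> a"
  shows "(r^2 * (1 - a))^2 \<le> norm (of_real (r^2) - cnj z * (\<i> * of_real (b*r)))^2"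
proof -
  have "norm (cnj z * (\<i> * of_real (b*r))) = norm z * (b * r)" using assms by (simp add: norm_mult abs_of_nonneg)
  also have "\<dots> \<le> a * r * r" using assms by (intro mult_mono) auto
  finally have 1: "norm (cnj z * (\<i> * of_real (b*r))) \<le> a * r^2" by (simp add: power2_eq_square)
  have "r^2 - a*r^2 \<le> norm (of_real (r^2) - cnj z * (\<i> * of_real (b*r)))"
    using norm_triangle_ineq2[of "of_real (r^2)" "cnj z * (\<i> * of_real (b*r))"] 1
    by (simp add: norm_power)
  moreover have "0 \<le> r^2 - a*r^2" using assms by (simp add: algebra_simps)
  ultimately show ?thesis by (simp add: algebra_simps power_mono)
qed

lemma aux_ineq:
  fixes A C k a b rk :: real
  assumes "A \<ge> 0" "C > 0" "k \<ge> 0" "rk \<ge> 0" "a \<ge> 0" "b \<ge> 0" "a*A \<le> k" "rk \<le> b*C"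
  shows "A*(C+rk)/((A+k)*C) * ((1+a)/(1+b)) \<le> 1"
proof (cases "A + k = 0")
  case True thus ?thesis by simp
next
  case False
  hence pos: "A + k > 0" using assms by linarith
  have "(A*(1+a))*(C+rk) \<le> (A+k)*(C*(1+b))"
    by (rule mult_mono) (use assms in \<open>auto simp: algebra_simps\<close>)
  have d: "(A+k)*(C*(1+b)) > 0" using pos assms by simp
  have eq: "A*(C+rk)/((A+k)*C) * ((1+a)/(1+b)) = (A*(1+a)*(C+rk))/((A+k)*(C*(1+b)))"
    by (simp add: mult_ac)
  show ?thesis unfolding eq using d \<open>(A*(1+a))*(C+rk) \<le> (A+k)*(C*(1+b))\<close> by (simp add: divide_le_eq_1)
qed

lemma bl_bound:
  assumes r: "r > 0" and al: "0 < \<alpha>" "\<alpha> < 1" and be: "0 < \<beta>" "\<beta> < 1" and "0 < \<eta>"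
    and y: "\<eta> \<le> Im z" "Im z \<le> Y" and zn: "norm z \<le> \<alpha> * r"
  shows "norm (bl r z (\<i> * of_real (\<beta>*r)))^2 * Lambda \<alpha> \<beta> \<eta> Y r \<le> 1"
proof -
  define p where "p = \<i> * complex_of_real (\<beta>*r)"
  define R where "R = complex_of_real (r^2)"
  define A where "A = norm (p - z)^2"
  define C where "C = norm (R - cnj z * p)^2"
  define k where "k = 4 * Im z * (\<beta>*r)"
  define a where "a = 4 * \<beta> * \<eta> / (\<alpha> + \<beta>)^2 * (1 / r)"
  define b where "b = 4 * Y / (1 - \<alpha>)^2 * (1 / r)"
  have e1: "norm (p - cnj z)^2 = A + k" unfolding A_def k_def p_def by (rule id1)
  have e2: "norm (R - z * p)^2 = C + r^2 * k" unfolding C_def k_def p_def R_def using id2[of r z "\<beta>*r"]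
    by (simp add: algebra_simps)
  have b1: "A \<le> ((\<alpha>+\<beta>)*r)^2" unfolding A_def p_def using bnd1[OF zn] be r by auto
  have b2: "(r^2*(1-\<alpha>))^2 \<le> C" unfolding C_def p_def R_def using bnd2[OF zn] be r al by auto
  have "(r^2*(1-\<alpha>))^2 > 0" using al r by simp
  hence Cpos: "C > 0" using b2 by linarith
  have "norm (bl r z p) = norm (p-z)*norm(R - z*p)/(norm(p - cnj z)*norm(R - cnj z * p))"
    unfolding bl_def R_def by (simp add: norm_mult norm_divide)
  hence "norm (bl r z p)^2 = norm (p-z)^2*norm(R - z*p)^2/(norm(p - cnj z)^2*norm(R - cnj z * p)^2)"
    by (simp add: power_mult_distrib power_divide)
  hence "norm (bl r z p)^2 = A * (C + r^2*k) / ((A+k)*C)"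
    unfolding e1 e2 by (simp add: A_def C_def)
  moreover have "Lambda \<alpha> \<beta> \<eta> Y r = (1+a)/(1+b)" unfolding Lambda_def a_def b_def ..
  moreover have "A*(C+r^2*k)/((A+k)*C) * ((1+a)/(1+b)) \<le> 1"
  proof (rule aux_ineq)
    show "0 \<le> A" "0 < C" using Cpos by (auto simp: A_def)
    show "0 \<le> k" "0 \<le> a" "0 \<le> b" "0 \<le> r^2*k" using y \<open>0<\<eta>\<close> be r al unfolding k_def a_def b_def
      by (auto intro!: mult_nonneg_nonneg divide_nonneg_nonneg)
    have "a * A \<le> a * ((\<alpha>+\<beta>)*r)^2" using b1 \<open>0 \<le> a\<close> by (rule mult_left_mono)
    also have "\<dots> = 4*\<beta>*\<eta>*r"
    proof -
      have "(\<alpha> + \<beta>)^2 \<noteq> 0" using al be by simp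
      hence "a * ((\<alpha>+\<beta>)*r)^2 = 4*\<beta>*\<eta>*((\<alpha>+\<beta>)^2/(\<alpha>+\<beta>)^2)*(r^2/r)"
        unfolding a_def by (simp add: power_mult_distrib)
      also have "\<dots> = 4*\<beta>*\<eta>*r" using \<open>(\<alpha> + \<beta>)^2 \<noteq> 0\<close> r by (simp add: power2_eq_square)
      finally show ?thesis .
    qed
    also have "\<dots> \<le> k" unfolding k_def using y be r by simp
    finally show "a * A \<le> k" .
    have "r^2*k \<le> 4 * Y * r^3" unfolding k_def using y be r \<open>0<\<eta>\<close>
      by (simp add: power2_eq_square power3_eq_cube mult_left_mono mult_right_mono mult_mono)
    also have "\<dots> = b * (r^2*(1-\<alpha>))^2"
    proof -
      have nz: "(1-\<alpha>)^2 \<noteq> 0" using al by simp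
      have "b * (r^2*(1-\<alpha>))^2 = 4*Y*((1-\<alpha>)^2/(1-\<alpha>)^2)*((r^2)^2/r)"
        unfolding b_def by (simp add: power_mult_distrib)
      also have "\<dots> = 4*Y*r^3" using nz r by (simp add: power2_eq_square power3_eq_cube)
      finally show ?thesis by simp
    qed
    also have "\<dots> \<le> b * C" using b2 \<open>0 \<le> b\<close> by (rule mult_left_mono)
    finally show "r^2*k \<le> b * C" .
  qed
  ultimately show ?thesis unfolding p_def by simp
qed

lemma half_disc_iff: "w \<in> half_disc r \<longleftrightarrow> Im w \<ge> 0 \<and> norm w \<le> r"
  by (auto simp: half_disc_def)

lemma bl_nz:
  assumes "Im z > 0" "norm z < r" "Im w \<ge> 0" "norm w \<le> r"
  shows "w - cnj z \<noteq> 0" "of_real (r^2) - cnj z * w \<noteq> 0" "of_real (r^2) - z * w \<noteq> 0"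
proof -
  show "w - cnj z \<noteq> 0"
  proof
    assume "w - cnj z = 0"
    hence "Im (w - cnj z) = 0" by simp
    thus False using assms by simp
  qed
  have r: "r > 0" using assms by (smt (verit) norm_ge_zero)
  have "norm z * norm w < r * r"
  proof (cases "norm w = 0")
    case True thus ?thesis using r by simp
  next
    case False
    hence "norm z * norm w < r * norm w" using assms by (intro mult_strict_right_mono) auto
    also have "\<dots> \<le> r * r" using assms r by (intro mult_left_mono) auto
    finally show ?thesis .
  qed
  hence lt: "norm z * norm w < r^2" by (simp add: power2_eq_square)
  show "of_real (r^2) - cnj z * w \<noteq> 0"
  proof
    assume "of_real (r^2) - cnj z * w = 0"
    hence "norm (cnj z * w) = norm (of_real (r^2) :: complex)" by (simp add: algebra_simps)
    thus False using lt r by (simp add: norm_mult norm_power)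
  qed
  show "of_real (r^2) - z * w \<noteq> 0"
  proof
    assume "of_real (r^2) - z * w = 0"
    hence "norm (z * w) = norm (of_real (r^2) :: complex)" by (simp add: algebra_simps)
    thus False using lt r by (simp add: norm_mult norm_power)
  qed
qed

lemma bl_analytic:
  assumes "Im z > 0" "norm z < r" "Im w \<ge> 0" "norm w \<le> r"
  shows "bl r z analytic_on {w}"
  using bl_nz[OF assms] unfolding bl_def by (intro analytic_intros) auto

lemma bl_zero_iff:
  assumes "Im z > 0" "norm z < r" "Im w \<ge> 0" "norm w \<le> r"
  shows "bl r z w = 0 \<longleftrightarrow> w = z"
  using bl_nz[OF assms] unfolding bl_def by auto

lemma bl_boundary:
  assumes "Im z > 0" "norm z < r" "Im w \<ge> 0" "norm w \<le> r" "Im w = 0 \<or> norm w = r"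
  shows "norm (bl r z w) = 1"
proof -
  note nz = bl_nz[OF assms(1-4)]
  have wz: "w \<noteq> z" using assms by auto
  have r: "r > 0" using assms by (smt (verit) norm_ge_zero)
  from assms(5) show ?thesis
  proof
    assume "Im w = 0"
    hence cw: "cnj w = w" by (simp add: complex_eq_iff)
    have 1: "norm (w - cnj z) = norm (w - z)"
      by (metis cw complex_cnj_diff complex_mod_cnj)
    have "cnj (of_real (r^2) - z * w) = of_real (r^2) - cnj z * w" using cw by simp
    hence 2: "norm (of_real (r^2) - cnj z * w) = norm (of_real (r^2) - z * w)"
      by (metis complex_mod_cnj)
    have "norm (bl r z w) = norm (w-z)*norm(of_real(r^2) - z*w)/(norm(w - cnj z)*norm(of_real(r^2) - cnj z*w))"
      unfolding bl_def by (simp add: norm_mult norm_divide)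
    also have "\<dots> = 1" unfolding 1 2 using nz wz by simp
    finally show ?thesis .
  next
    assume nw: "norm w = r"
    have R: "(of_real (r^2) :: complex) = w * cnj w"
      using complex_norm_square[of w] nw by simp
    have 1: "norm (of_real (r^2) - z * w) = r * norm (w - cnj z)"
    proof -
      have "of_real (r^2) - z * w = w * (cnj w - z)" unfolding R by (simp add: algebra_simps)
      hence "norm (of_real (r^2) - z * w) = r * norm (cnj w - z)" by (simp add: norm_mult nw)
      also have "norm (cnj w - z) = norm (w - cnj z)"
        by (metis complex_cnj_cnj complex_cnj_diff complex_mod_cnj)
      finally show ?thesis .
    qed
    have 2: "norm (of_real (r^2) - cnj z * w) = r * norm (w - z)"
    proof -
      have "of_real (r^2) - cnj z * w = w * (cnj w - cnj z)" unfolding R by (simp add: algebra_simps)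
      hence "norm (of_real (r^2) - cnj z * w) = r * norm (cnj w - cnj z)" by (simp add: norm_mult nw)
      also have "norm (cnj w - cnj z) = norm (w - z)"
        by (metis complex_cnj_diff complex_mod_cnj)
      finally show ?thesis .
    qed
    have "norm (bl r z w) = norm (w-z)*norm(of_real(r^2) - z*w)/(norm(w - cnj z)*norm(of_real(r^2) - cnj z*w))"
      unfolding bl_def by (simp add: norm_mult norm_divide)
    also have "\<dots> = 1" unfolding 1 2 using nz wz r by simp
    finally show ?thesis .
  qed
qed



lemma core:
  fixes f :: "complex \<Rightarrow> complex"
  assumes r: "r > 0" and T: "open T" "connected T" "f holomorphic_on T" "half_disc r \<subseteq> T"
    and p: "p \<in> half_disc r" "f p \<noteq> 0"
    and Zf: "finite Z" and Zs: "\<And>z. z \<in> Z \<Longrightarrow> f z = 0 \<and> Im z > 0 \<and> norm z < r"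
  shows "norm (f p) \<le> Sup ((\<lambda>z. norm (f z)) ` frontier (half_disc r)) *
            (\<Prod>z\<in>Z. norm (bl r z p) ^ nat (zorder f z))"
proof -
  define H where "H = half_disc r"
  define M where "M = Sup ((\<lambda>z. norm (f z)) ` frontier H)"
  define m where "m z = nat (zorder f z)" for z
  define P where "P w = (\<Prod>z\<in>Z. bl r z w ^ m z)" for w
  define h where "h w = f w / P w" for w
  define g where "g = remove_sings h"
  have HI: "w \<in> H \<longleftrightarrow> Im w \<ge> 0 \<and> norm w \<le> r" for w unfolding H_def by (rule half_disc_iff)
  have Pana: "P analytic_on {w}" if "w \<in> H" for w
    unfolding P_def using that Zs HI by (intro analytic_intros bl_analytic) auto
  have Pnz: "P w \<noteq> 0" if "w \<in> H" "w \<notin> Z" for w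
  proof
    assume "P w = 0"
    then obtain z where z: "z \<in> Z" "bl r z w = 0" unfolding P_def using Zf by (auto simp: prod_zero_iff)
    hence "w = z" using bl_zero_iff[of z r w] Zs[OF z(1)] that HI by auto
    thus False using z that by auto
  qed
  have fana: "f analytic_on {w}" if "w \<in> H" for w
    using holomorphic_on_imp_analytic_at[OF T(3,1)] that T(4) H_def by auto
  have hana: "h analytic_on {w}" if "w \<in> H" "w \<notin> Z" for w
    unfolding h_def using that fana Pana Pnz by (intro analytic_intros) auto
  have gana: "g analytic_on {w}" if "w \<in> H" for w
  proof (cases "w \<in> Z")
    case False
    thus ?thesis unfolding g_def using hana that by (intro remove_sings_analytic_on)
  next
    case True
    define z0 where "z0 = w"
    have z0: "z0 \<in> Z" "z0 \<in> H" "z0 \<in> T" using True that T(4) H_def by (auto simp: z0_def)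
    obtain \<rho> where \<rho>: "\<rho> > 0" "cball z0 \<rho> \<subseteq> T" "zor_poly f z0 holomorphic_on cball z0 \<rho>"
      "\<forall>w\<in>cball z0 \<rho>. f w = zor_poly f z0 w * (w - z0) ^ nat (zorder f z0) \<and> zor_poly f z0 w \<noteq> 0"
      using zorder_exist_zero[OF T(3,1,2) z0(3)] p T(4) by blast
    define F where "F = zor_poly f z0"
    define R where "R = (complex_of_real (r^2))"
    define q where "q w = (R - z0 * w) / ((w - cnj z0) * (R - cnj z0 * w))" for w
    define Q where "Q w = q w ^ m z0 * (\<Prod>z\<in>Z-{z0}. bl r z w ^ m z)" for w
    have blq: "bl r z0 w = (w - z0) * q w" for w unfolding bl_def q_def R_def by simp
    have PQ: "P w = (w - z0) ^ m z0 * Q w" for w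
      unfolding P_def Q_def using Zf z0(1)
      by (simp add: prod.remove blq power_mult_distrib mult_ac)
    have z0s: "Im z0 > 0" "norm z0 < r" using Zs z0 by auto
    have z0H: "Im z0 \<ge> 0" "norm z0 \<le> r" using z0s by auto
    note nz0 = bl_nz[OF z0s z0H, folded R_def]
    have qana: "q analytic_on {z0}" unfolding q_def using nz0 by (intro analytic_intros) auto
    have qnz: "q z0 \<noteq> 0" unfolding q_def using nz0 by auto
    have Qana: "Q analytic_on {z0}" unfolding Q_def using qana Zs z0H
      by (intro analytic_intros bl_analytic) auto
    have Qnz: "Q z0 \<noteq> 0" unfolding Q_def using qnz Zs z0H bl_zero_iff[of _ r z0] Zf by (auto simp: prod_zero_iff)
    obtain e1 where e1: "e1 > 0" "Q holomorphic_on ball z0 e1"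
      using Qana unfolding analytic_on_def by auto
    have "isCont Q z0" using Qana analytic_at_imp_isCont by blast
    then obtain e2 where e2: "e2 > 0" "\<And>y. dist z0 y < e2 \<Longrightarrow> Q y \<noteq> 0"
      using continuous_at_avoid[of z0 Q 0] Qnz by auto
    define e where "e = min \<rho> (min e1 e2)"
    have e: "e > 0" using \<rho> e1 e2 by (simp add: e_def)
    have ball_sub: "ball z0 e \<subseteq> cball z0 \<rho>" "ball z0 e \<subseteq> ball z0 e1" unfolding e_def by auto
    have FQ: "(\<lambda>w. F w / Q w) holomorphic_on ball z0 e"
    proof (intro holomorphic_intros)
      show "F holomorphic_on ball z0 e" unfolding F_def using \<rho>(3) ball_sub(1) by (rule holomorphic_on_subset)
      show "Q holomorphic_on ball z0 e" using e1(2) ball_sub(2) by (rule holomorphic_on_subset)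
      show "Q w \<noteq> 0" if "w \<in> ball z0 e" for w using that e2 unfolding e_def by auto
    qed
    have heq: "h w = F w / Q w" if "w \<in> ball z0 e" "w \<noteq> z0" for w
    proof -
      have "w \<in> cball z0 \<rho>" using that ball_sub by auto
      hence "f w = F w * (w - z0) ^ m z0" using \<rho>(4) unfolding F_def m_def by auto
      moreover have "(w - z0) ^ m z0 \<noteq> 0" using that by auto
      ultimately show ?thesis unfolding h_def PQ by simp
    qed
    have iso: "isolated_singularity_at h z0"
      unfolding isolated_singularity_at_def
    proof (intro exI conjI)
      show "e > 0" by fact
      have "h holomorphic_on ball z0 e - {z0}"
        by (rule holomorphic_transform[OF holomorphic_on_subset[OF FQ]]) (use heq in auto)
      thus "h analytic_on ball z0 e - {z0}" by (subst analytic_on_open) auto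
    qed
    have "isCont (\<lambda>w. F w / Q w) z0"
      by (rule continuous_on_interior[OF holomorphic_on_imp_continuous_on[OF FQ]]) (use e in auto)
    hence "(\<lambda>w. F w / Q w) \<midarrow>z0\<rightarrow> F z0 / Q z0" by (simp add: isCont_def)
    moreover have "eventually (\<lambda>w. F w / Q w = h w) (at z0)"
      unfolding eventually_at using e heq by (intro exI[of _ e]) (auto simp: dist_commute)
    ultimately have "h \<midarrow>z0\<rightarrow> F z0 / Q z0" by (rule Lim_transform_eventually)
    thus ?thesis unfolding g_def z0_def[symmetric] using iso by (intro remove_sings_analytic_at)
  qed
  have gH: "g analytic_on H" using gana analytic_on_analytic_at by blast
  have closedH: "closed H" unfolding H_def half_disc_def
    by (intro closed_Int closed_cball closed_halfspace_Im_ge)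
  have boundedH: "bounded H" unfolding H_def half_disc_def by (intro bounded_Int) auto
  have intH: "w \<in> interior H" if "Im w > 0" "norm w < r" for w
  proof -
    have "ball 0 r \<inter> {z. Im z > 0} \<subseteq> H"
    proof
      fix x assume "x \<in> ball 0 r \<inter> {z. Im z > 0}"
      hence "Im x \<ge> 0" "norm x \<le> r" by (auto simp: dist_norm)
      thus "x \<in> H" using HI by blast
    qed
    moreover have "open (ball 0 r \<inter> {z. Im z > 0})" by (intro open_Int open_ball open_halfspace_Im_gt)
    ultimately have "ball 0 r \<inter> {z. Im z > 0} \<subseteq> interior H" by (rule interior_maximal)
    moreover have "w \<in> ball 0 r \<inter> {z. Im z > 0}" using that by (simp add: dist_norm)
    ultimately show ?thesis by blast
  qed
  have frontH: "w \<in> H \<and> w \<notin> Z \<and> (Im w = 0 \<or> norm w = r)" if "w \<in> frontier H" for w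
  proof -
    have wH: "w \<in> H" "w \<notin> interior H" using that closedH by (auto simp: frontier_def closure_closed)
    have "w \<notin> Z"
    proof
      assume "w \<in> Z"
      hence "Im w > 0" "norm w < r" using Zs[of w] by auto
      thus False using intH wH(2) by blast
    qed
    moreover have "Im w = 0 \<or> norm w = r"
    proof (rule ccontr)
      assume "\<not> (Im w = 0 \<or> norm w = r)"
      moreover have "Im w \<ge> 0" "norm w \<le> r" using wH(1) HI by auto
      ultimately have "Im w > 0" "norm w < r" by auto
      thus False using intH wH(2) by blast
    qed
    ultimately show ?thesis using wH by auto
  qed
  have contf: "continuous_on (frontier H) f"
  proof -
    have "frontier H \<subseteq> T" using frontH T(4) unfolding H_def by blast
    thus ?thesis using holomorphic_on_imp_continuous_on[OF T(3)] by (rule continuous_on_subset[rotated])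
  qed
  have "compact ((\<lambda>z. norm (f z)) ` frontier H)"
    by (intro compact_continuous_image continuous_intros contf compact_frontier_bounded boundedH)
  hence bdd: "bdd_above ((\<lambda>z. norm (f z)) ` frontier H)"
    by (intro bounded_imp_bdd_above compact_imp_bounded)
  have normP: "norm (P w) = (\<Prod>z\<in>Z. norm (bl r z w) ^ m z)" for w
    unfolding P_def by (simp add: prod_norm[symmetric] norm_power)
  have leM: "norm (g w) \<le> M" if "w \<in> frontier H" for w
  proof -
    have w: "w \<in> H" "w \<notin> Z" "Im w = 0 \<or> norm w = r" using frontH[OF that] by auto
    have "g w = h w" unfolding g_def using hana[OF w(1,2)] by (rule remove_sings_at_analytic)
    moreover have "norm (P w) = 1" unfolding normP
    proof (rule prod.neutral, rule ballI)
      fix z assume "z \<in> Z"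
      hence "norm (bl r z w) = 1" using bl_boundary[of z r w] Zs[of z] w HI[of w] by simp
      thus "norm (bl r z w) ^ m z = 1" by simp
    qed
    ultimately have "norm (g w) = norm (f w)" by (simp add: h_def norm_divide)
    also have "\<dots> \<le> M" unfolding M_def using bdd that by (intro cSup_upper) auto
    finally show ?thesis .
  qed
  have pH: "p \<in> H" "p \<notin> Z" using p Zs[of p] unfolding H_def by auto
  have "norm (g p) \<le> M"
  proof (rule maximum_modulus_frontier[of g H])
    show "g holomorphic_on interior H"
      by (rule holomorphic_on_subset[OF analytic_imp_holomorphic[OF gH] interior_subset])
    show "continuous_on (closure H) g"
      using gH closedH by (simp add: closure_closed analytic_imp_holomorphic holomorphic_on_imp_continuous_on)
  qed (fact boundedH, fact leM, fact pH(1))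
  moreover have "g p = f p / P p" unfolding g_def h_def[symmetric] using hana[OF pH]
    by (simp add: remove_sings_at_analytic h_def)
  moreover have "P p \<noteq> 0" using Pnz pH by auto
  ultimately have "norm (f p) / norm (P p) \<le> M" by (simp add: norm_divide)
  hence "norm (f p) \<le> M * norm (P p)" using \<open>P p \<noteq> 0\<close> by (simp add: divide_le_eq)
  thus ?thesis unfolding normP M_def H_def m_def .
qed


lemma Lambda_gt1:
  assumes r: "r > 0" and "0 < \<eta>" "\<eta> < Y" and al: "0 < \<alpha>" "\<alpha> < 1" and be: "0 < \<beta>" "\<beta> < 1"
    and h: "\<beta> * ((1 - \<alpha>) / (\<alpha> + \<beta>))^2 > Y / \<eta>"
  shows "Lambda \<alpha> \<beta> \<eta> Y r > 1"
proof -
  have ab: "(\<alpha>+\<beta>)^2 > 0" "(1-\<alpha>)^2 > 0" using al be by auto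
  from h have "\<beta> * (1-\<alpha>)^2 / (\<alpha>+\<beta>)^2 > Y / \<eta>" by (simp add: power_divide)
  hence "\<beta> * (1-\<alpha>)^2 / (\<alpha>+\<beta>)^2 * \<eta> > Y" using \<open>0 < \<eta>\<close> by (simp add: divide_less_eq)
  hence "\<beta> * \<eta> * (1-\<alpha>)^2 > Y * (\<alpha>+\<beta>)^2" using ab by (simp add: field_simps)
  hence "\<beta> * \<eta> / (\<alpha>+\<beta>)^2 > Y / (1-\<alpha>)^2" using ab by (simp add: field_simps)
  hence gt: "(\<beta> * \<eta> / (\<alpha>+\<beta>)^2) * (4/r) > (Y / (1-\<alpha>)^2) * (4/r)" using r
    by (intro mult_strict_right_mono) auto
  have eq1: "4 * \<beta> * \<eta> / (\<alpha> + \<beta>)^2 * (1 / r) = (\<beta> * \<eta> / (\<alpha>+\<beta>)^2) * (4/r)" by simp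
  have eq2: "4 * Y / (1 - \<alpha>)^2 * (1 / r) = (Y / (1-\<alpha>)^2) * (4/r)" by simp
  have "1 + 4 * \<beta> * \<eta> / (\<alpha> + \<beta>)^2 * (1 / r) > 1 + 4 * Y / (1 - \<alpha>)^2 * (1 / r)"
    unfolding eq1 eq2 using gt by simp
  moreover have "4 * Y / (1 - \<alpha>)^2 * (1 / r) \<ge> 0" using assms by auto
  ultimately show ?thesis unfolding Lambda_def by (subst less_divide_eq_1_pos) auto
qed

theorem mainTheorem8:
  fixes f :: "complex \<Rightarrow> complex" and r Y \<eta> \<alpha> \<beta> :: real
  assumes "r > 0"
    and "f analytic_on half_disc r"
    and "0 < \<eta>" and "\<eta> < Y" and "Y < r"
    and "0 < \<alpha>" and "\<alpha> < 1" and "0 < \<beta>" and "\<beta> < 1"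
    and "\<beta> * ((1 - \<alpha>) / (\<alpha> + \<beta>))^2 > Y / \<eta>"
    and "f (\<i> * of_real (\<beta> * r)) \<noteq> 0"
  shows "real_of_int (zero_count f (strip_region (\<alpha> * r) \<eta> Y))
           \<le> 2 / ln (Lambda \<alpha> \<beta> \<eta> Y r) *
              ln (1 / min \<beta> (1 - \<beta>) *
                  (Sup ((\<lambda>z. norm (f z)) ` frontier (half_disc r)) /
                   norm (f (\<i> * of_real (\<beta> * r)))))
       \<and> Lambda \<alpha> \<beta> \<eta> Y r > 1"
proof -
  note r = assms(1) and al = assms(6,7) and be = assms(8,9)
  define L where "L = Lambda \<alpha> \<beta> \<eta> Y r"
  have L1: "L > 1" unfolding L_def using assms by (intro Lambda_gt1) auto
  define p where "p = \<i> * complex_of_real (\<beta> * r)"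
  define H where "H = half_disc r"
  define M where "M = Sup ((\<lambda>z. norm (f z)) ` frontier H)"
  have fp: "f p \<noteq> 0" using assms(11) p_def by simp
  have pH: "p \<in> H" unfolding H_def half_disc_iff p_def using r be by (simp add: norm_mult)
  obtain U where U: "open U" "H \<subseteq> U" "f holomorphic_on U"
    using assms(2) unfolding analytic_on_holomorphic H_def by blast
  define T where "T = connected_component_set U p"
  have Hconn: "connected H" unfolding H_def half_disc_def
    by (intro convex_connected convex_Int convex_cball convex_halfspace_Im_ge)
  have HT: "H \<subseteq> T" unfolding T_def by (rule connected_component_maximal[OF pH Hconn U(2)])
  have T: "open T" "connected T" "f holomorphic_on T" "half_disc r \<subseteq> T"
    using U HT unfolding T_def H_def
    by (auto intro: open_connected_component holomorphic_on_subset[OF _ connected_component_subset])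
  define Zall where "Zall = {z \<in> strip_region (\<alpha> * r) \<eta> Y. f z = 0}"
  define Z where "Z = (if finite Zall then Zall else {})"
  have Zf: "finite Z" unfolding Z_def by auto
  have Zs: "f z = 0 \<and> Im z > 0 \<and> norm z < r" if "z \<in> Z" for z
  proof -
    have z: "z \<in> Zall" using that unfolding Z_def by (auto split: if_splits)
    hence "norm z \<le> \<alpha> * r" "Im z \<ge> \<eta>" "f z = 0" unfolding Zall_def strip_region_def by auto
    moreover have "\<alpha> * r < r" using al r by simp
    ultimately show ?thesis using assms(3) by auto
  qed
  define m where "m z = nat (zorder f z)" for z
  define n where "n = (\<Sum>z\<in>Z. m z)"
  define Pi where "Pi = (\<Prod>z\<in>Z. norm (bl r z p) ^ m z)"
  have core': "norm (f p) \<le> M * Pi"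
    unfolding M_def Pi_def m_def H_def using core[OF r T pH[unfolded H_def] fp Zf Zs] by simp
  have Pi0: "Pi \<ge> 0" unfolding Pi_def by (intro prod_nonneg) auto
  have Pi2: "Pi^2 \<le> (1/L)^n"
  proof -
    have "Pi^2 = (\<Prod>z\<in>Z. (norm (bl r z p) ^ 2) ^ m z)"
      unfolding Pi_def prod_power_distrib by (simp add: power_mult[symmetric] mult.commute)
    also have "\<dots> \<le> (\<Prod>z\<in>Z. (1/L) ^ m z)"
    proof (rule prod_mono, rule conjI)
      fix z assume z: "z \<in> Z"
      hence zz: "norm z \<le> \<alpha> * r" "\<eta> \<le> Im z" "Im z \<le> Y"
        unfolding Z_def Zall_def strip_region_def by (auto split: if_splits)
      have "norm (bl r z p)^2 * L \<le> 1"
        unfolding p_def L_def using bl_bound[OF r al be assms(3) zz(2,3) zz(1)] .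
      hence "norm (bl r z p)^2 \<le> 1/L" using L1 by (simp add: le_divide_eq)
      thus "(norm (bl r z p)^2) ^ m z \<le> (1/L) ^ m z" by (intro power_mono) auto
    qed auto
    also have "\<dots> = (1/L)^n" unfolding n_def by (simp add: power_sum)
    finally show ?thesis .
  qed
  have pos: "M * Pi > 0" using core' fp by (smt (verit) norm_ge_zero zero_less_norm_iff)
  hence Mpos: "M > 0" using Pi0 by (simp add: zero_less_mult_iff)
  have "norm (f p)^2 \<le> (M * Pi)^2" using core' by (intro power_mono) auto
  also have "\<dots> = M^2 * Pi^2" by (simp add: power_mult_distrib)
  also have "\<dots> \<le> M^2 * (1/L)^n" using Pi2 by (intro mult_left_mono) auto
  finally have "norm (f p)^2 \<le> M^2 * (1/L)^n" .
  hence "L^n * norm (f p)^2 \<le> M^2" using L1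
    by (simp add: power_one_over field_simps)
  hence "ln (L^n * norm (f p)^2) \<le> ln (M^2)" using L1 fp Mpos by (subst ln_le_cancel_iff) auto
  hence "n * ln L + 2 * ln (norm (f p)) \<le> 2 * ln M" using L1 fp Mpos
    by (simp add: ln_mult ln_realpow)
  hence nle: "n * ln L \<le> 2 * ln (M / norm (f p))" using fp Mpos by (simp add: ln_div)
  have lnL: "ln L > 0" using L1 by simp
  have mn: "min \<beta> (1-\<beta>) > 0" "min \<beta> (1-\<beta>) \<le> 1" using be by auto
  have "ln (M / norm (f p)) \<le> ln (1 / min \<beta> (1-\<beta>) * (M / norm (f p)))"
  proof (subst ln_le_cancel_iff)
    show "0 < M / norm (f p)" using Mpos fp by simp
    show "0 < 1 / min \<beta> (1-\<beta>) * (M / norm (f p))" using Mpos fp mn by simp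
    have "1 \<le> 1 / min \<beta> (1-\<beta>)" using mn by simp
    thus "M / norm (f p) \<le> 1 / min \<beta> (1-\<beta>) * (M / norm (f p))"
      using mult_right_mono[OF \<open>1 \<le> 1 / min \<beta> (1-\<beta>)\<close>, of "M / norm (f p)"] Mpos by simp
  qed
  hence nbound: "real n \<le> 2 / ln L * ln (1 / min \<beta> (1-\<beta>) * (M / norm (f p)))"
    using nle lnL by (simp add: field_simps)
  have zc: "real_of_int (zero_count f (strip_region (\<alpha> * r) \<eta> Y)) \<le> real n"
  proof (cases "finite Zall")
    case True
    have "real_of_int (zero_count f (strip_region (\<alpha> * r) \<eta> Y)) = (\<Sum>z\<in>Zall. real_of_int (zorder f z))"
      unfolding zero_count_def Zall_def by simp
    also have "\<dots> \<le> (\<Sum>z\<in>Zall. real (m z))" unfolding m_def by (intro sum_mono) auto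
    also have "\<dots> = real n" unfolding n_def Z_def using True by simp
    finally show ?thesis .
  next
    case False
    thus ?thesis unfolding zero_count_def Zall_def[symmetric] by simp
  qed
  show ?thesis using zc nbound L1 unfolding L_def M_def H_def p_def by simp
qed
end
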